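(* Let $R$ be a commutative ring equipped with an exhaustive $\Gamma$-filtration $FR=\{F_\gamma R\}_{\gamma\in\Gamma}$, and put $R_0=F_0R$ (a subring of $R$ containing $1$). Let $R\langle X\rangle=R\langle X_1,\dots,X_n\rangle$ and let $\mathcal I$ be an ideal of $R\langle X\rangle$ generated by a subset $\mathcal G\subset R_0\langle X\rangle=R_0\langle X_1,\dots,X_n\rangle$ which is a monic Gröbner basis of $\mathcal I$ in $R\langle X\rangle$ with respect to a monomial ordering $\prec$ on $\mathcal B_R$, with $\mathrm{LM}(g)\neq 1$ for every $g\in\mathcal G$. Let $A=R\langle X\rangle/\mathcal I$ and let $\overline{N(\mathcal G)}$ be the image of $N(\mathcal G)$ in $A$. For $\gamma\in\Gamma$ put $$F_\gamma A=\Big\{a=\textstyle\sum_i\lambda_i\bar w_i \;\Big|\; \lambda_i\in F_\gamma R,\ \bar w_i\in\overline{N(\mathcal G)}\Big\}.$$ Then $FA=\{F_\gamma A\}_{\gamma\in\Gamma}$ is an exhaustive $\Gamma$-filtration of $A$, and $F_\gamma R=R\cap F_\gamma A$ for every $\gamma\in\Gamma$ (where $R$ is identified with its image $R\cdot\bar 1$ in $A$).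
   Context: $\Gamma$ is a totally ordered (not necessarily commutative) monoid with ordering $<$, whose operation is written $+$ and neutral element $0$. An exhaustive $\Gamma$-filtration of a ring $S$ is a family $\{F_\gamma S\}_{\gamma\in\Gamma}$ of additive subgroups with (F1) $S=\bigcup_\gamma F_\gamma S$; (F2) $F_{\gamma_1}S\subseteq F_{\gamma_2}S$ whenever $\gamma_1<\gamma_2$; (F3) $F_\gamma S\cdot F_\tau S\subseteq F_{\gamma+\tau}S$; (F4) $1\in F_0S$. For a commutative ring $D$, $D\langle X\rangle=D\langle X_1,\dots,X_n\rangle$ is the free $D$-algebra, with standard $D$-basis $\mathcal B_D$ of words in $X_1,\dots,X_n$ (empty word $=1$). A monomial ordering is a well-ordering $\prec$ on words such that $u\prec v$ implies $wus\prec wvs$, and $w=uv$ implies $u\preceq w$, $v\preceq w$. For nonzero $f=\sum\lambda_iw_i$ ($\lambda_i\neq0$, $w_1\prec\dots\prec w_s$), $\mathrm{LM}(f)=w_s$ and $\mathrm{LC}(f)=\lambda_s$. A set $G$ is monic if $\mathrm{LC}(g)=1$ for all $g\in G$. A word $v$ divides $u$ if $u=wvs$ for words $w,s$. A monic Gröbner basis of an ideal $I$ is a monic subset $\mathcal G\subset I$ such that for every nonzero $f\in I$ there is $g\in\mathcal G$ with $\mathrm{LM}(g)\mid\mathrm{LM}(f)$. $N(\mathcal G)$ is the set of words not divisible by $\mathrm{LM}(g)$ for any $g\in\mathcal G$; when $\mathcal G$ is a monic Gröbner basis of $I$, $\overline{N(\mathcal G)}$ is a free $R$-basis of $R\langle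 X\rangle/I$. *)

theory Defs
  imports "HOL-Library.Poly_Mapping" "HOL-Algebra.QuotRing"
begin

definition exh_filtration ::
  "('a, 'b) ring_scheme \<Rightarrow> ('g::{monoid_add, linorder} \<Rightarrow> 'a set) \<Rightarrow> bool" where
  "exh_filtration S F \<longleftrightarrow>
     (\<forall>\<gamma>. additive_subgroup (F \<gamma>) S) \<and>
     carrier S = (\<Union>\<gamma>. F \<gamma>) \<and>
     (\<forall>\<gamma>1 \<gamma>2. \<gamma>1 < \<gamma>2 \<longrightarrow> F \<gamma>1 \<subseteq> F \<gamma>2) \<and>
     (\<forall>\<gamma> \<tau>. \<forall>x \<in> F \<gamma>. \<forall>y \<in> F \<tau>. x \<otimes>\<^bsub>S\<^esub> y \<in> F (\<gamma> + \<tau>)) \<and>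
     \<one>\<^bsub>S\<^esub> \<in> F 0"

definition totally_ordered_monoid :: "'g::{monoid_add, linorder} itself \<Rightarrow> bool" where
  "totally_ordered_monoid _ \<longleftrightarrow>
     (\<forall>a b c :: 'g. a \<le> b \<longrightarrow> a + c \<le> b + c \<and> c + a \<le> c + b)"

definition tc_ring :: "'a::ring_1 ring" where
  "tc_ring = \<lparr>carrier = UNIV, mult = (*), one = 1, zero = 0, add = (+)\<rparr>"

text \<open>Words in the letters of type 'v (the variables X_1..X_n); concatenation is
  written as +, the empty word (=1) is 0.\<close>

datatype 'v word = Word "'v list"

instantiation word :: (type) monoid_add
begin
definition zero_word :: "'v word" where "zero_word = Word []"
fun plus_word :: "'v word \<Rightarrow> 'v word \<Rightarrow> 'v word" where
  "plus_word (Word u) (Word v) = Word (u @ v)"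
instance
proof
  fix a b c :: "'v word"
  show "a + b + c = a + (b + c)" by (cases a; cases b; cases c) simp
  show "0 + a = a" by (cases a) (simp add: zero_word_def)
  show "a + 0 = a" by (cases a) (simp add: zero_word_def)
qed
end

text \<open>The free algebra D<X_1,...,X_n> with D-basis the words:
  finitely supported functions from words to D, with convolution product.\<close>

type_synonym ('v, 'r) free_alg = "'v word \<Rightarrow>\<^sub>0 'r"

definition word_dvd :: "'v word \<Rightarrow> 'v word \<Rightarrow> bool" where
  "word_dvd v u \<longleftrightarrow> (\<exists>w s. u = w + v + s)"

definition monomial_ordering :: "('v word \<Rightarrow> 'v word \<Rightarrow> bool) \<Rightarrow> bool" where
  "monomial_ordering lt \<longleftrightarrow>
     (\<forall>u. \<not> lt u u) \<and>
     (\<forall>u v w. lt u v \<longrightarrow> lt v w \<longrightarrow> lt u w) \<and>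
     (\<forall>u v. u \<noteq> v \<longrightarrow> lt u v \<or> lt v u) \<and>
     wfP lt \<and>
     (\<forall>u v w s. lt u v \<longrightarrow> lt (w + u + s) (w + v + s)) \<and>
     (\<forall>u v. (lt u (u + v) \<or> u = u + v) \<and> (lt v (u + v) \<or> v = u + v))"

definition LM :: "('v word \<Rightarrow> 'v word \<Rightarrow> bool) \<Rightarrow> ('v, 'r::zero) free_alg \<Rightarrow> 'v word" where
  "LM lt f = (THE w. w \<in> Poly_Mapping.keys f \<and> (\<forall>v \<in> Poly_Mapping.keys f. v \<noteq> w \<longrightarrow> lt v w))"

definition LC :: "('v word \<Rightarrow> 'v word \<Rightarrow> bool) \<Rightarrow> ('v, 'r::zero) free_alg \<Rightarrow> 'r" where
  "LC lt f = Poly_Mapping.lookup f (LM lt f)"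

definition monic_groebner_basis ::
  "('v word \<Rightarrow> 'v word \<Rightarrow> bool) \<Rightarrow> ('v, 'r::{zero,one}) free_alg set \<Rightarrow> ('v, 'r) free_alg set \<Rightarrow> bool" where
  "monic_groebner_basis lt G I \<longleftrightarrow>
     G \<subseteq> I \<and> (\<forall>g \<in> G. g \<noteq> 0 \<and> LC lt g = 1) \<and>
     (\<forall>f \<in> I. f \<noteq> 0 \<longrightarrow> (\<exists>g \<in> G. word_dvd (LM lt g) (LM lt f)))"

definition normal_words :: "('v word \<Rightarrow> 'v word \<Rightarrow> bool) \<Rightarrow> ('v, 'r::zero) free_alg set \<Rightarrow> 'v word set" where
  "normal_words lt G = {w. \<forall>g \<in> G. \<not> word_dvd (LM lt g) w}"

end

theory Submission
  imports Defs
begin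

lemma tc_simps[simp]: "carrier (tc_ring::'a::ring_1 ring) = UNIV" "mult (tc_ring::'a::ring_1 ring) = (*)"
  "add (tc_ring::'a::ring_1 ring) = (+)" "one (tc_ring::'a::ring_1 ring) = 1" "zero (tc_ring::'a::ring_1 ring) = 0"
  by (simp_all add: tc_ring_def)

lemma tc_ring_ring: "ring (tc_ring :: 'a::ring_1 ring)"
proof (rule ringI)
  show "abelian_group (tc_ring :: 'a::ring_1 ring)"
    by (rule abelian_groupI) (auto simp: algebra_simps intro: exI[of _ "- _"])
  show "monoid (tc_ring :: 'a::ring_1 ring)"
    by (rule monoidI) (auto simp: algebra_simps)
qed (auto simp: algebra_simps)

lemma tc_a_inv[simp]: "a_inv (tc_ring :: 'a::ring_1 ring) x = - x"
proof -
  interpret ring "tc_ring :: 'a ring" by (rule tc_ring_ring)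
  show ?thesis by (rule minus_equality) auto
qed

lemma tc_a_minus[simp]: "a_minus (tc_ring :: 'a::ring_1 ring) x y = x - y"
  by (simp add: a_minus_def)

lemma tc_ideal:
  assumes "ideal I (tc_ring :: 'a::ring_1 ring)"
  shows "0 \<in> I" "a \<in> I \<Longrightarrow> b \<in> I \<Longrightarrow> a + b \<in> I" "a \<in> I \<Longrightarrow> - a \<in> I"
    "a \<in> I \<Longrightarrow> b \<in> I \<Longrightarrow> a - b \<in> I"
    "a \<in> I \<Longrightarrow> x * a \<in> I" "a \<in> I \<Longrightarrow> a * x \<in> I"
proof -
  interpret ideal I "tc_ring :: 'a ring" by fact
  show "0 \<in> I" using additive_subgroup.zero_closed[OF is_additive_subgroup] by simp
  show "a \<in> I \<Longrightarrow> b \<in> I \<Longrightarrow> a + b \<in> I" using additive_subgroup.a_closed[OF is_additive_subgroup] by simp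
  show "a \<in> I \<Longrightarrow> - a \<in> I" using additive_subgroup.a_inv_closed[OF is_additive_subgroup] by simp
  show "a \<in> I \<Longrightarrow> b \<in> I \<Longrightarrow> a - b \<in> I" using additive_subgroup.a_closed[OF is_additive_subgroup] additive_subgroup.a_inv_closed[OF is_additive_subgroup] by (metis diff_conv_add_uminus tc_a_inv tc_simps(3))
  show "a \<in> I \<Longrightarrow> x * a \<in> I" using I_l_closed by simp
  show "a \<in> I \<Longrightarrow> a * x \<in> I" using I_r_closed by simp
qed

lemma tc_ideal_sum:
  assumes "ideal I (tc_ring :: 'a::ring_1 ring)" "\<And>x. x \<in> A \<Longrightarrow> f x \<in> I"
  shows "sum f A \<in> I"
  using assms(2) by (induction A rule: infinite_finite_induct) (auto intro: tc_ideal[OF assms(1)])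

lemma tc_coset_eq:
  assumes "ideal I (tc_ring :: 'a::ring_1 ring)"
  shows "(I +>\<^bsub>tc_ring::'a ring\<^esub> a = I +>\<^bsub>tc_ring::'a ring\<^esub> b) \<longleftrightarrow> a - b \<in> I"
proof -
  interpret ideal I "tc_ring :: 'a ring" by fact
  show ?thesis
    by (metis UNIV_I a_rcos_module_minus a_repr_independence' a_repr_independenceD ring_axioms tc_a_minus tc_simps(1))
qed


lemma max_unique:
  assumes irr: "\<forall>u. \<not> lt u u" and tr: "\<forall>u v w. lt u v \<longrightarrow> lt v w \<longrightarrow> lt u w"
    and tot: "\<forall>u v. u \<noteq> v \<longrightarrow> lt u v \<or> lt v u"
    and fin: "finite K" and ne: "K \<noteq> {}"
  shows "\<exists>!w. w \<in> K \<and> (\<forall>v \<in> K. v \<noteq> w \<longrightarrow> lt v w)"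
proof -
  have "\<exists>w. w \<in> K \<and> (\<forall>v \<in> K. v \<noteq> w \<longrightarrow> lt v w)"
    using fin ne
  proof (induction K rule: finite_ne_induct)
    case (singleton x) then show ?case by auto
  next
    case (insert x F)
    then obtain m where m: "m \<in> F" "\<forall>v \<in> F. v \<noteq> m \<longrightarrow> lt v m" by blast
    show ?case
    proof (cases "lt m x")
      case True
      have "\<forall>v \<in> insert x F. v \<noteq> x \<longrightarrow> lt v x"
      proof (intro ballI impI)
        fix v assume "v \<in> insert x F" "v \<noteq> x"
        then have "v \<in> F" by simp
        then show "lt v x" using m(2) True tr by metis
      qed
      then show ?thesis by blast
    next
      case False
      then have "x \<noteq> m \<longrightarrow> lt x m" using tot by blast
      then show ?thesis using m by (intro exI[of _ m]) auto
    qed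
  qed
  moreover have "w1 = w2" if "w1 \<in> K \<and> (\<forall>v \<in> K. v \<noteq> w1 \<longrightarrow> lt v w1)"
     "w2 \<in> K \<and> (\<forall>v \<in> K. v \<noteq> w2 \<longrightarrow> lt v w2)" for w1 w2
  proof (rule ccontr)
    assume "w1 \<noteq> w2"
    then have "lt w1 w2" "lt w2 w1" using that by auto
    then show False using irr tr by metis
  qed
  ultimately show ?thesis by blast
qed

lemma mo_parts:
  assumes "monomial_ordering lt"
  shows "\<forall>u. \<not> lt u u" "\<forall>u v w. lt u v \<longrightarrow> lt v w \<longrightarrow> lt u w"
    "\<forall>u v. u \<noteq> v \<longrightarrow> lt u v \<or> lt v u" "wfP lt"
    "\<forall>u v w s. lt u v \<longrightarrow> lt (w + u + s) (w + v + s)"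
proof -
  note * = assms[unfolded monomial_ordering_def]
  show "\<forall>u. \<not> lt u u" using * by (elim conjE) assumption
  show "\<forall>u v w. lt u v \<longrightarrow> lt v w \<longrightarrow> lt u w" using * by (elim conjE) assumption
  show "\<forall>u v. u \<noteq> v \<longrightarrow> lt u v \<or> lt v u" using * by (elim conjE) assumption
  show "wfP lt" using * by (elim conjE) assumption
  show "\<forall>u v w s. lt u v \<longrightarrow> lt (w + u + s) (w + v + s)" using * by (elim conjE) assumption
qed

lemma LM_prop:
  assumes ord: "monomial_ordering lt" and f: "f \<noteq> 0"
  shows "LM lt f \<in> Poly_Mapping.keys f" "\<And>v. v \<in> Poly_Mapping.keys f \<Longrightarrow> v \<noteq> LM lt f \<Longrightarrow> lt v (LM lt f)"
proof -
  have "\<exists>!w. w \<in> Poly_Mapping.keys f \<and> (\<forall>v \<in> Poly_Mapping.keys f. v \<noteq> w \<longrightarrow> lt v w)"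
    by (rule max_unique[OF mo_parts(1-3)[OF ord]]) (use f in auto)
  from theI'[OF this] show "LM lt f \<in> Poly_Mapping.keys f" "\<And>v. v \<in> Poly_Mapping.keys f \<Longrightarrow> v \<noteq> LM lt f \<Longrightarrow> lt v (LM lt f)"
    unfolding LM_def by blast+
qed

lemma indep:
  assumes ord: "monomial_ordering lt" and GB: "monic_groebner_basis lt G I"
    and fI: "f \<in> I" and keys: "Poly_Mapping.keys f \<subseteq> normal_words lt G"
  shows "f = 0"
proof (rule ccontr)
  assume "f \<noteq> 0"
  then have "LM lt f \<in> normal_words lt G" using LM_prop(1)[OF ord] keys by blast
  moreover obtain g where "g \<in> G" "word_dvd (LM lt g) (LM lt f)" using GB fI \<open>f \<noteq> 0\<close>
    unfolding monic_groebner_basis_def by blast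
  ultimately show False unfolding normal_words_def by blast
qed

lemma word_dvd_zero: "word_dvd u (0::'v word) \<Longrightarrow> u = 0"
proof -
  assume "word_dvd u 0"
  then obtain w s where "0 = w + u + s" unfolding word_dvd_def by blast
  then show "u = 0"
    by (cases w; cases u; cases s) (simp add: zero_word_def)
qed

lemma expand: "f = (\<Sum>k\<in>Poly_Mapping.keys f. Poly_Mapping.single k (Poly_Mapping.lookup f k))"
proof (rule poly_mapping_eqI)
  fix j
  have "(\<Sum>k\<in>Poly_Mapping.keys f. Poly_Mapping.lookup (Poly_Mapping.single k (Poly_Mapping.lookup f k)) j)
      = (\<Sum>k\<in>Poly_Mapping.keys f. if j = k then Poly_Mapping.lookup f k else 0)"
    by (rule sum.cong) (auto simp: lookup_single)
  also have "\<dots> = Poly_Mapping.lookup f j"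
    by (simp add: in_keys_iff)
  finally show "Poly_Mapping.lookup f j = Poly_Mapping.lookup (\<Sum>k\<in>Poly_Mapping.keys f. Poly_Mapping.single k (Poly_Mapping.lookup f k)) j"
    by (simp add: lookup_sum)
qed


definition NF :: "('v word \<Rightarrow> 'v word \<Rightarrow> bool) \<Rightarrow> ('v, 'r::zero) free_alg set \<Rightarrow> 'r set \<Rightarrow> ('v, 'r) free_alg set" where
  "NF lt G F = {h. (\<forall>u. Poly_Mapping.lookup h u \<in> F) \<and> Poly_Mapping.keys h \<subseteq> normal_words lt G}"

lemma F_sum:
  assumes F0: "0 \<in> F" and Fadd: "\<And>x y. x \<in> F \<Longrightarrow> y \<in> F \<Longrightarrow> x + y \<in> F"
    and "\<And>x. x \<in> A \<Longrightarrow> f x \<in> F"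
  shows "sum f A \<in> F"
  using assms(3) by (induction A rule: infinite_finite_induct) (auto simp: F0 Fadd)

lemma NF_closed:
  fixes F :: "'r::ring_1 set"
  assumes F0: "0 \<in> F" and Fadd: "\<And>x y. x \<in> F \<Longrightarrow> y \<in> F \<Longrightarrow> x + y \<in> F"
    and Fneg: "\<And>x. x \<in> F \<Longrightarrow> - x \<in> F"
  shows "0 \<in> NF lt G F" "a \<in> NF lt G F \<Longrightarrow> b \<in> NF lt G F \<Longrightarrow> a + b \<in> NF lt G F"
    "a \<in> NF lt G F \<Longrightarrow> - a \<in> NF lt G F"
    "(\<And>x. x \<in> A \<Longrightarrow> f x \<in> NF lt G F) \<Longrightarrow> sum f A \<in> NF lt G F"
    "c \<in> F \<Longrightarrow> u \<in> normal_words lt G \<Longrightarrow> Poly_Mapping.single u c \<in> NF lt G F"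
proof -
  show z: "0 \<in> NF lt G F" using F0 by (simp add: NF_def)
  show add: "a + b \<in> NF lt G F" if "a \<in> NF lt G F" "b \<in> NF lt G F" for a b
    using that keys_add[of a b] by (auto simp: NF_def lookup_add Fadd)
  show "a \<in> NF lt G F \<Longrightarrow> - a \<in> NF lt G F" by (auto simp: NF_def Fneg)
  show "(\<And>x. x \<in> A \<Longrightarrow> f x \<in> NF lt G F) \<Longrightarrow> sum f A \<in> NF lt G F"
    by (induction A rule: infinite_finite_induct) (auto simp: z add)
  show "c \<in> F \<Longrightarrow> u \<in> normal_words lt G \<Longrightarrow> Poly_Mapping.single u c \<in> NF lt G F"
    by (auto simp: NF_def lookup_single when_def F0)
qed

lemma NF_single: "0 \<in> F \<Longrightarrow> c \<in> F \<Longrightarrow> u \<in> normal_words lt G \<Longrightarrow> Poly_Mapping.single u c \<in> NF lt G F"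
  by (auto simp: NF_def lookup_single when_def)

lemma span_single:
  fixes G :: "('v, 'r::ring_1) free_alg set" and F :: "'r set"
  assumes ord: "monomial_ordering lt" and GB: "monic_groebner_basis lt G I"
    and idl: "ideal I (tc_ring :: ('v, 'r) free_alg ring)"
    and F0: "0 \<in> F" and Fadd: "\<And>x y. x \<in> F \<Longrightarrow> y \<in> F \<Longrightarrow> x + y \<in> F"
    and Fneg: "\<And>x. x \<in> F \<Longrightarrow> - x \<in> F"
    and Fmul: "\<And>c g v. c \<in> F \<Longrightarrow> g \<in> G \<Longrightarrow> c * Poly_Mapping.lookup g v \<in> F"
  shows "c \<in> F \<Longrightarrow> \<exists>h \<in> NF lt G F. Poly_Mapping.single u c - h \<in> I"
proof -
  have wf: "wfP lt" using mo_parts(4)[OF ord] .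
  note NFc = NF_closed[OF F0 Fadd Fneg]
  note Ic = tc_ideal[OF idl]
  show "c \<in> F \<Longrightarrow> \<exists>h \<in> NF lt G F. Poly_Mapping.single u c - h \<in> I"
  proof (induction u arbitrary: c rule: wfp_induct_rule[OF wf])
    case (1 u)
    show ?case
    proof (cases "u \<in> normal_words lt G")
      case True
      then show ?thesis using NF_single[OF F0 1(2) True] Ic(1) by (intro bexI[of _ "Poly_Mapping.single u c"]) auto
    next
      case False
      then obtain g w s where g: "g \<in> G" and u: "u = w + LM lt g + s"
        unfolding normal_words_def word_dvd_def by blast
      define m where "m = LM lt g"
      have gnz: "g \<noteq> 0" and LC: "Poly_Mapping.lookup g m = 1"
        using GB g unfolding monic_groebner_basis_def LC_def m_def by auto
      have mk: "m \<in> Poly_Mapping.keys g" using LM_prop(1)[OF ord gnz] m_def by simp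
      have ltm: "lt v m" if "v \<in> Poly_Mapping.keys g" "v \<noteq> m" for v
        using LM_prop(2)[OF ord gnz that[unfolded m_def]] m_def by simp
      define K where "K = Poly_Mapping.keys g - {m}"
      define t where "t = Poly_Mapping.single w c * g * Poly_Mapping.single s 1"
      have gI: "g \<in> I" using g GB unfolding monic_groebner_basis_def by blast
      have tI: "t \<in> I" unfolding t_def by (rule Ic(6)[OF Ic(5)[OF gI]])
      have "t = (\<Sum>v\<in>Poly_Mapping.keys g. Poly_Mapping.single w c * Poly_Mapping.single v (Poly_Mapping.lookup g v) * Poly_Mapping.single s 1)"
        unfolding t_def by (subst expand[of g]) (simp add: sum_distrib_left sum_distrib_right)
      also have "\<dots> = (\<Sum>v\<in>Poly_Mapping.keys g. Poly_Mapping.single (w + v + s) (c * Poly_Mapping.lookup g v))"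
        by (simp add: mult_single)
      also have "\<dots> = Poly_Mapping.single u c + (\<Sum>v\<in>K. Poly_Mapping.single (w + v + s) (c * Poly_Mapping.lookup g v))"
        unfolding K_def using mk LC u m_def by (simp add: sum.remove)
      finally have t: "t = Poly_Mapping.single u c + (\<Sum>v\<in>K. Poly_Mapping.single (w + v + s) (c * Poly_Mapping.lookup g v))" .
      have "\<forall>v\<in>K. \<exists>h \<in> NF lt G F. Poly_Mapping.single (w + v + s) (c * Poly_Mapping.lookup g v) - h \<in> I"
      proof
        fix v assume v: "v \<in> K"
        have mono: "\<forall>u v w s. lt u v \<longrightarrow> lt (w + u + s) (w + v + s)" using mo_parts(5)[OF ord] .
        have "lt v m" using ltm v unfolding K_def by blast
        then have "lt (w + v + s) u" using mono unfolding u m_def by blast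
        then show "\<exists>h \<in> NF lt G F. Poly_Mapping.single (w + v + s) (c * Poly_Mapping.lookup g v) - h \<in> I"
          using 1(1) Fmul[OF 1(2) g] by blast
      qed
      then obtain H where H: "\<And>v. v \<in> K \<Longrightarrow> H v \<in> NF lt G F"
        "\<And>v. v \<in> K \<Longrightarrow> Poly_Mapping.single (w + v + s) (c * Poly_Mapping.lookup g v) - H v \<in> I"
        by metis
      have "Poly_Mapping.single u c - (- sum H K) = t - (\<Sum>v\<in>K. Poly_Mapping.single (w + v + s) (c * Poly_Mapping.lookup g v) - H v)"
        unfolding t by (simp add: sum_subtractf)
      also have "\<dots> \<in> I" by (rule Ic(4)[OF tI tc_ideal_sum[OF idl]]) (rule H(2))
      finally show ?thesis using H(1) NFc(3,4) by blast
    qed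
  qed
qed


lemma span:
  fixes G :: "('v, 'r::ring_1) free_alg set" and F :: "'r set"
  assumes ord: "monomial_ordering lt" and GB: "monic_groebner_basis lt G I"
    and idl: "ideal I (tc_ring :: ('v, 'r) free_alg ring)"
    and F0: "0 \<in> F" and Fadd: "\<And>x y. x \<in> F \<Longrightarrow> y \<in> F \<Longrightarrow> x + y \<in> F"
    and Fneg: "\<And>x. x \<in> F \<Longrightarrow> - x \<in> F"
    and Fmul: "\<And>c g v. c \<in> F \<Longrightarrow> g \<in> G \<Longrightarrow> c * Poly_Mapping.lookup g v \<in> F"
    and f: "\<And>u. Poly_Mapping.lookup f u \<in> F"
  shows "\<exists>h \<in> NF lt G F. f - h \<in> I"
proof -
  have "\<forall>k \<in> Poly_Mapping.keys f. \<exists>h \<in> NF lt G F. Poly_Mapping.single k (Poly_Mapping.lookup f k) - h \<in> I"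
    using span_single[OF ord GB idl F0 Fadd Fneg Fmul f] by blast
  then obtain H where H: "\<And>k. k \<in> Poly_Mapping.keys f \<Longrightarrow> H k \<in> NF lt G F"
    "\<And>k. k \<in> Poly_Mapping.keys f \<Longrightarrow> Poly_Mapping.single k (Poly_Mapping.lookup f k) - H k \<in> I"
    by metis
  have "f - sum H (Poly_Mapping.keys f) = (\<Sum>k\<in>Poly_Mapping.keys f. Poly_Mapping.single k (Poly_Mapping.lookup f k) - H k)"
    unfolding sum_subtractf expand[of f, symmetric] ..
  also have "\<dots> \<in> I" by (rule tc_ideal_sum[OF idl]) (rule H(2))
  finally show ?thesis using NF_closed(4)[OF F0 Fadd Fneg] H(1) by blast
qed

lemma FA_char:
  fixes F :: "'r::ring_1 set"
  assumes F0: "0 \<in> F" and Fadd: "\<And>x y. x \<in> F \<Longrightarrow> y \<in> F \<Longrightarrow> x + y \<in> F"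
  shows "{a. \<exists>(k::nat) c w. (\<forall>i<k. c i \<in> F \<and> w i \<in> normal_words lt G) \<and>
           a = I +>\<^bsub>(tc_ring :: ('v, 'r) free_alg ring)\<^esub>
                 (\<Sum>i<k. Poly_Mapping.single (w i) (c i))}
       = (\<lambda>h. I +>\<^bsub>(tc_ring :: ('v, 'r) free_alg ring)\<^esub> h) ` NF lt G F"
proof (intro equalityI subsetI)
  fix a assume "a \<in> {a. \<exists>(k::nat) c w. (\<forall>i<k. c i \<in> F \<and> w i \<in> normal_words lt G) \<and>
           a = I +>\<^bsub>(tc_ring :: ('v, 'r) free_alg ring)\<^esub>
                 (\<Sum>i<k. Poly_Mapping.single (w i) (c i))}"
  then obtain k :: nat and c w where kcw: "\<forall>i<k. c i \<in> F \<and> w i \<in> normal_words lt G"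
    and a: "a = I +>\<^bsub>(tc_ring :: ('v, 'r) free_alg ring)\<^esub> (\<Sum>i<k. Poly_Mapping.single (w i) (c i))"
    by blast
  have "(\<Sum>i<k. Poly_Mapping.single (w i) (c i)) \<in> NF lt G F"
    unfolding NF_def
  proof (intro CollectI conjI allI)
    fix u show "Poly_Mapping.lookup (\<Sum>i<k. Poly_Mapping.single (w i) (c i)) u \<in> F"
      unfolding lookup_sum
    proof (rule F_sum[OF F0 Fadd])
      fix i assume "i \<in> {..<k}"
      then have "c i \<in> F" using kcw by simp
      then show "Poly_Mapping.lookup (Poly_Mapping.single (w i) (c i)) u \<in> F"
        by (simp add: lookup_single when_def F0)
    qed
    show "Poly_Mapping.keys (\<Sum>i<k. Poly_Mapping.single (w i) (c i)) \<subseteq> normal_words lt G"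
    proof
      fix x assume "x \<in> Poly_Mapping.keys (\<Sum>i<k. Poly_Mapping.single (w i) (c i))"
      then obtain i where i: "i < k" "x \<in> Poly_Mapping.keys (Poly_Mapping.single (w i) (c i))"
        using keys_sum[of "\<lambda>i. Poly_Mapping.single (w i) (c i)" "{..<k}"] by blast
      then have "x = w i" by (simp split: if_splits)
      then show "x \<in> normal_words lt G" using kcw i(1) by blast
    qed
  qed
  then show "a \<in> (\<lambda>h. I +>\<^bsub>(tc_ring :: ('v, 'r) free_alg ring)\<^esub> h) ` NF lt G F"
    unfolding a by (rule imageI)
next
  fix a assume "a \<in> (\<lambda>h. I +>\<^bsub>(tc_ring :: ('v, 'r) free_alg ring)\<^esub> h) ` NF lt G F"
  then obtain h where h: "h \<in> NF lt G F" and a: "a = I +>\<^bsub>(tc_ring :: ('v, 'r) free_alg ring)\<^esub> h"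
    by (rule imageE)
  obtain xs where xs: "set xs = Poly_Mapping.keys h" "distinct xs"
    using finite_distinct_list[OF finite_keys[of h]] by metis
  have bij: "bij_betw ((!) xs) {..<length xs} (Poly_Mapping.keys h)"
    by (rule bij_betw_nth[OF xs(2) refl xs(1)[symmetric]])
  have "h = (\<Sum>k\<in>Poly_Mapping.keys h. Poly_Mapping.single k (Poly_Mapping.lookup h k))" by (rule expand)
  also have "\<dots> = (\<Sum>i<length xs. Poly_Mapping.single (xs ! i) (Poly_Mapping.lookup h (xs ! i)))"
    by (rule sym, rule sum.reindex_bij_betw[OF bij, of "\<lambda>k. Poly_Mapping.single k (Poly_Mapping.lookup h k)"])
  finally have hs: "h = \<dots>" .
  have a2: "a = I +>\<^bsub>(tc_ring :: ('v, 'r) free_alg ring)\<^esub> (\<Sum>i<length xs. Poly_Mapping.single (xs ! i) (Poly_Mapping.lookup h (xs ! i)))"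
    unfolding a by (rule arg_cong[OF hs])
  have all: "\<forall>i<length xs. Poly_Mapping.lookup h (xs ! i) \<in> F \<and> xs ! i \<in> normal_words lt G"
  proof (intro allI impI)
    fix i assume "i < length xs"
    then have "xs ! i \<in> Poly_Mapping.keys h" using xs(1) nth_mem by metis
    then show "Poly_Mapping.lookup h (xs ! i) \<in> F \<and> xs ! i \<in> normal_words lt G"
      using h unfolding NF_def by blast
  qed
  show "a \<in> {a. \<exists>(k::nat) c w. (\<forall>i<k. c i \<in> F \<and> w i \<in> normal_words lt G) \<and>
           a = I +>\<^bsub>(tc_ring :: ('v, 'r) free_alg ring)\<^esub>
                 (\<Sum>i<k. Poly_Mapping.single (w i) (c i))}"
    unfolding mem_Collect_eq
    by (rule exI[of _ "length xs"], rule exI[of _ "\<lambda>i. Poly_Mapping.lookup h (xs ! i)"], rule exI[of _ "(!) xs"], rule conjI[OF all a2])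
qed


lemma tc_subgroupI:
  fixes F :: "'a::ring_1 set"
  assumes F0: "0 \<in> F" and Fadd: "\<And>x y. x \<in> F \<Longrightarrow> y \<in> F \<Longrightarrow> x + y \<in> F"
    and Fneg: "\<And>x. x \<in> F \<Longrightarrow> - x \<in> F"
  shows "subgroup F (add_monoid (tc_ring :: 'a ring))"
proof
  show "F \<subseteq> carrier (add_monoid (tc_ring :: 'a ring))" by simp
  show "\<And>x y. x \<in> F \<Longrightarrow> y \<in> F \<Longrightarrow> x \<otimes>\<^bsub>add_monoid (tc_ring :: 'a ring)\<^esub> y \<in> F" using Fadd by simp
  show "\<one>\<^bsub>add_monoid (tc_ring :: 'a ring)\<^esub> \<in> F" using F0 by simp
  fix x assume x: "x \<in> F"
  have "a_inv (tc_ring :: 'a ring) x \<in> F" using Fneg[OF x] by simp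
  then show "inv\<^bsub>add_monoid (tc_ring :: 'a ring)\<^esub> x \<in> F" unfolding a_inv_def .
qed

lemma tc_addsub:
  fixes F :: "'a::ring_1 set"
  assumes "additive_subgroup F (tc_ring :: 'a ring)"
  shows "0 \<in> F" "\<And>x y. x \<in> F \<Longrightarrow> y \<in> F \<Longrightarrow> x + y \<in> F" "\<And>x. x \<in> F \<Longrightarrow> - x \<in> F"
proof -
  interpret additive_subgroup F "tc_ring :: 'a ring" by fact
  show "0 \<in> F" using zero_closed by simp
  show "\<And>x y. x \<in> F \<Longrightarrow> y \<in> F \<Longrightarrow> x + y \<in> F" using a_closed by simp
  show "\<And>x. x \<in> F \<Longrightarrow> - x \<in> F" using a_inv_closed by simp
qed


theorem theorem3p1:
  fixes FR :: "'g::{monoid_add, linorder} \<Rightarrow> 'r::comm_ring_1 set"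
    and G :: "('v::finite, 'r) free_alg set"
    and lt :: "'v word \<Rightarrow> 'v word \<Rightarrow> bool"
    and I :: "('v, 'r) free_alg set"
    and FA :: "'g \<Rightarrow> ('v, 'r) free_alg set set"
  assumes Gamma: "totally_ordered_monoid TYPE('g)"
    and FR: "exh_filtration (tc_ring :: 'r ring) FR"
    and G_R0: "\<forall>g \<in> G. \<forall>w. Poly_Mapping.lookup g w \<in> FR 0"
    and I_def: "I = genideal (tc_ring :: ('v, 'r) free_alg ring) G"
    and ord: "monomial_ordering lt"
    and GB: "monic_groebner_basis lt G I"
    and LM_ne1: "\<forall>g \<in> G. LM lt g \<noteq> 0"
    and FA_def: "\<And>\<gamma>. FA \<gamma> =
       {a. \<exists>(k::nat) c w. (\<forall>i<k. c i \<in> FR \<gamma> \<and> w i \<in> normal_words lt G) \<and>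
           a = I +>\<^bsub>(tc_ring :: ('v, 'r) free_alg ring)\<^esub>
                 (\<Sum>i<k. Poly_Mapping.single (w i) (c i))}"
  shows "exh_filtration ((tc_ring :: ('v, 'r) free_alg ring) Quot I) FA \<and>
         (\<forall>\<gamma>. FR \<gamma> = {r. I +>\<^bsub>(tc_ring :: ('v, 'r) free_alg ring)\<^esub> Poly_Mapping.single 0 r \<in> FA \<gamma>})"
proof -
  let ?R = "tc_ring :: ('v, 'r) free_alg ring"
  let ?c = "\<lambda>h. I +>\<^bsub>?R\<^esub> h"
  have idl: "ideal I ?R" unfolding I_def by (rule ring.genideal_ideal[OF tc_ring_ring]) simp
  have FRsub: "\<And>\<gamma>. additive_subgroup (FR \<gamma>) (tc_ring :: 'r ring)" using FR unfolding exh_filtration_def by blast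
  note F0 = tc_addsub(1)[OF FRsub] and Fadd = tc_addsub(2)[OF FRsub] and Fneg = tc_addsub(3)[OF FRsub]
  have FRU: "\<And>x. \<exists>\<gamma>. x \<in> FR \<gamma>" using FR unfolding exh_filtration_def by auto
  have FRmono: "\<And>\<gamma>1 \<gamma>2. \<gamma>1 \<le> \<gamma>2 \<Longrightarrow> FR \<gamma>1 \<subseteq> FR \<gamma>2"
    using FR unfolding exh_filtration_def by (metis order.order_iff_strict subset_refl)
  have FRmul: "\<And>\<gamma> \<tau> x y. x \<in> FR \<gamma> \<Longrightarrow> y \<in> FR \<tau> \<Longrightarrow> x * y \<in> FR (\<gamma> + \<tau>)"
    using FR unfolding exh_filtration_def by simp
  have FR1: "1 \<in> FR 0" using FR unfolding exh_filtration_def by simp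
  have Fmul: "\<And>\<gamma> c g v. c \<in> FR \<gamma> \<Longrightarrow> g \<in> G \<Longrightarrow> c * Poly_Mapping.lookup g v \<in> FR \<gamma>"
    using FRmul G_R0 by (metis add_0_right)
  have FAeq: "\<And>\<gamma>. FA \<gamma> = ?c ` NF lt G (FR \<gamma>)"
    unfolding FA_def by (rule FA_char[OF F0 Fadd])
  have hom: "ring_hom_ring ?R (?R Quot I) ?c" by (rule ideal.rcos_ring_hom_ring[OF idl])
  have spanF: "\<And>\<gamma> f. (\<And>u. Poly_Mapping.lookup f u \<in> FR \<gamma>) \<Longrightarrow> \<exists>h \<in> NF lt G (FR \<gamma>). f - h \<in> I"
    by (rule span[OF ord GB idl F0 Fadd Fneg Fmul])
  have ceq: "\<And>a b. (?c a = ?c b) \<longleftrightarrow> a - b \<in> I" by (rule tc_coset_eq[OF idl])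
  have zero_nw: "0 \<in> normal_words lt G" using LM_ne1 word_dvd_zero unfolding normal_words_def by blast
  have carrQ: "carrier (?R Quot I) = range ?c"
    unfolding FactRing_def A_RCOSETS_def' by auto
  have FA_in: "FA \<gamma> \<subseteq> carrier (?R Quot I)" for \<gamma> unfolding carrQ FAeq by blast
  have toFA: "?c f \<in> FA \<gamma>" if fF: "\<And>u. Poly_Mapping.lookup f u \<in> FR \<gamma>" for f \<gamma>
  proof -
    obtain h where h: "h \<in> NF lt G (FR \<gamma>)" "f - h \<in> I" using spanF[OF fF] by blast
    have "?c f = ?c h" using ceq h(2) by blast
    then show ?thesis unfolding FAeq using h(1) by simp
  qed
  have part1: "exh_filtration (?R Quot I) FA"
    unfolding exh_filtration_def
  proof (intro conjI allI impI ballI)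
    fix \<gamma>
    have "subgroup (NF lt G (FR \<gamma>)) (add_monoid ?R)"
      by (rule tc_subgroupI) (use NF_closed[OF F0 Fadd Fneg] in auto)
    then have "subgroup (?c ` NF lt G (FR \<gamma>)) (add_monoid (?R Quot I))"
      by (rule ring_hom_ring.img_is_add_subgroup[OF hom])
    then show "additive_subgroup (FA \<gamma>) (?R Quot I)" unfolding FAeq by (rule additive_subgroupI)
  next
    show "carrier (?R Quot I) = (\<Union>\<gamma>. FA \<gamma>)"
    proof
      show "(\<Union>\<gamma>. FA \<gamma>) \<subseteq> carrier (?R Quot I)" using FA_in by blast
    next
      show "carrier (?R Quot I) \<subseteq> (\<Union>\<gamma>. FA \<gamma>)"
      proof
        fix x assume "x \<in> carrier (?R Quot I)"
        then obtain f where x: "x = ?c f" unfolding carrQ by (rule rangeE)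
        obtain \<gamma> where "\<And>u. Poly_Mapping.lookup f u \<in> FR \<gamma>"
        proof (cases "Poly_Mapping.keys f = {}")
          case True
          then have "\<And>u. Poly_Mapping.lookup f u \<in> FR 0" using F0 by (simp add: in_keys_iff)
          then show ?thesis using that by blast
        next
          case False
          have "\<forall>k. \<exists>\<gamma>. Poly_Mapping.lookup f k \<in> FR \<gamma>" using FRU by blast
          from choice[OF this] obtain gam where gam: "\<And>k. Poly_Mapping.lookup f k \<in> FR (gam k)" by blast
          define m where "m = Max (gam ` Poly_Mapping.keys f)"
          have "Poly_Mapping.lookup f u \<in> FR m" for u
          proof (cases "u \<in> Poly_Mapping.keys f")
            case True
            then have "gam u \<le> m" unfolding m_def by simp
            then show ?thesis using FRmono gam by blast
          next
            case False
            then show ?thesis using F0 by (simp add: in_keys_iff)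
          qed
          then show ?thesis using that by blast
        qed
        then have "x \<in> FA \<gamma>" unfolding x by (rule toFA)
        then show "x \<in> (\<Union>\<gamma>. FA \<gamma>)" by (rule UN_I[OF UNIV_I])
      qed
    qed
  next
    fix \<gamma>1 \<gamma>2 :: 'g assume "\<gamma>1 < \<gamma>2"
    then have "FR \<gamma>1 \<subseteq> FR \<gamma>2" using FRmono by simp
    then have "NF lt G (FR \<gamma>1) \<subseteq> NF lt G (FR \<gamma>2)" unfolding NF_def by blast
    then show "FA \<gamma>1 \<subseteq> FA \<gamma>2" unfolding FAeq by (rule image_mono)
  next
    fix \<gamma> \<tau> x y assume x: "x \<in> FA \<gamma>" and y: "y \<in> FA \<tau>"
    obtain p where p: "p \<in> NF lt G (FR \<gamma>)" "x = ?c p" using x unfolding FAeq by (rule imageE)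
    obtain q where q: "q \<in> NF lt G (FR \<tau>)" "y = ?c q" using y unfolding FAeq by (rule imageE)
    have xy: "x \<otimes>\<^bsub>?R Quot I\<^esub> y = ?c (p * q)"
      unfolding p(2) q(2) using ring_hom_mult[OF ring_hom_ring.homh[OF hom], of p q] by simp
    have "p * q = (\<Sum>k\<in>Poly_Mapping.keys p. \<Sum>l\<in>Poly_Mapping.keys q.
        Poly_Mapping.single (k + l) (Poly_Mapping.lookup p k * Poly_Mapping.lookup q l))"
      by (subst expand[of p], subst expand[of q]) (simp add: sum_distrib_left sum_distrib_right mult_single, rule sum.swap)
    then have "Poly_Mapping.lookup (p * q) u \<in> FR (\<gamma> + \<tau>)" for u
      using p(1) q(1) unfolding NF_def
      by (auto simp: lookup_sum lookup_single when_def F0 intro!: F_sum[OF F0 Fadd] FRmul)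
    then show "x \<otimes>\<^bsub>?R Quot I\<^esub> y \<in> FA (\<gamma> + \<tau>)" unfolding xy by (rule toFA)
  next
    have "\<one>\<^bsub>?R Quot I\<^esub> = ?c (Poly_Mapping.single 0 1)" by (simp add: FactRing_def)
    moreover have "Poly_Mapping.single 0 1 \<in> NF lt G (FR 0)" by (rule NF_single[OF F0 FR1 zero_nw])
    ultimately show "\<one>\<^bsub>?R Quot I\<^esub> \<in> FA 0" unfolding FAeq by simp
  qed
  have part2: "FR \<gamma> = {r. ?c (Poly_Mapping.single 0 r) \<in> FA \<gamma>}" for \<gamma>
  proof (intro equalityI subsetI CollectI)
    fix r assume "r \<in> FR \<gamma>"
    then have "Poly_Mapping.single 0 r \<in> NF lt G (FR \<gamma>)" by (rule NF_single[OF F0 _ zero_nw])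
    then show "?c (Poly_Mapping.single 0 r) \<in> FA \<gamma>" unfolding FAeq by (rule imageI)
  next
    fix r assume "r \<in> {r. ?c (Poly_Mapping.single 0 r) \<in> FA \<gamma>}"
    then have "?c (Poly_Mapping.single 0 r) \<in> ?c ` NF lt G (FR \<gamma>)" unfolding FAeq by simp
    then obtain h where h: "h \<in> NF lt G (FR \<gamma>)" "?c (Poly_Mapping.single 0 r) = ?c h" by (rule imageE)
    have inI: "Poly_Mapping.single 0 r - h \<in> I" using h(2) ceq by blast
    have "Poly_Mapping.keys (Poly_Mapping.single 0 r - h) \<subseteq> normal_words lt G"
      using keys_diff[of "Poly_Mapping.single 0 r" h] h(1) zero_nw unfolding NF_def
      by (auto split: if_splits)
    then have "Poly_Mapping.single 0 r - h = 0" by (rule indep[OF ord GB inI])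
    then have "h = Poly_Mapping.single 0 r" by simp
    then have "r = Poly_Mapping.lookup h 0" by simp
    then show "r \<in> FR \<gamma>" using h(1) unfolding NF_def by blast
  qed
  show ?thesis using part1 part2 by blast
qed

end
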